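(* Let $G=\mathrm{Circ}(a_0,\ldots,a_{n-1})$ be a Hermitian circulant with universal perfect state transfer. If $n$ is a prime, the square of a prime, or a power of two, then $a_j\neq 0$ for all $j=1,\ldots,n-1$ (i.e. $G$ is dense).
   Context: $\mathrm{Circ}(a_0,\ldots,a_{n-1})$ denotes the $n\times n$ matrix $C$ with $C_{j,k}=a_{k-j}$ (indices in $\mathbb{Z}/n\mathbb{Z}$), the adjacency matrix of a weighted graph. A graph with Hermitian adjacency matrix $A$ has universal perfect state transfer if for every pair of vertices $v,w$ there is $t>0$ with $|\langle w|e^{-\mathtt{i} At}|v\rangle|=1$. A circulant is dense if $a_j\ne 0$ for $j=1,\ldots,n-1$. *)

theory Defs
  imports "Jordan_Normal_Form.Matrix" "HOL-Computational_Algebra.Primes" Complex_Main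
begin

definition circ :: "nat \<Rightarrow> (nat \<Rightarrow> complex) \<Rightarrow> complex mat" where
  "circ n a = mat n n (\<lambda>(j, k). a ((k + n - j) mod n))"

definition hermitian_mat :: "complex mat \<Rightarrow> bool" where
  "hermitian_mat A \<longleftrightarrow> dim_row A = dim_col A \<and>
     (\<forall>j < dim_row A. \<forall>k < dim_row A. A $$ (k, j) = cnj (A $$ (j, k)))"

definition transfer_amp :: "complex mat \<Rightarrow> real \<Rightarrow> nat \<Rightarrow> nat \<Rightarrow> complex" where
  "transfer_amp A t w v = (\<Sum>m. ((- \<i> * complex_of_real t) ^ m / of_nat (fact m)) * (A ^\<^sub>m m) $$ (w, v))"

definition universal_pst :: "complex mat \<Rightarrow> bool" where
  "universal_pst A \<longleftrightarrow> (\<forall>v < dim_row A. \<forall>w < dim_row A. v \<noteq> w \<longrightarrow>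
     (\<exists>t > 0. cmod (transfer_amp A t w v) = 1))"

definition dense_circ :: "nat \<Rightarrow> (nat \<Rightarrow> complex) \<Rightarrow> bool" where
  "dense_circ n a \<longleftrightarrow> (\<forall>j \<in> {1..n-1}. a j \<noteq> 0)"

end

theory Submission
  imports Defs "Jordan_Normal_Form.Char_Poly"
begin

lemma algint_poly_root_unity:
  fixes z :: complex and q :: "int poly"
  assumes zN: "z ^ N = 1" and N: "N > 0"
  shows "algebraic_int (poly (map_poly of_int q) z)"
proof -
  define r where "r = poly (map_poly of_int q) z"
  define C :: "int mat" where "C = mat N N (\<lambda>(i,j). \<Sum>l\<le>degree q. if (i+l) mod N = j then coeff q l else 0)"
  define v :: "complex vec" where "v = vec N (\<lambda>j. z ^ j)"
  have Cc: "C \<in> carrier_mat N N" unfolding C_def by simp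
  have Cc': "map_mat (of_int :: int \<Rightarrow> complex) C \<in> carrier_mat N N" using Cc by simp
  have zmod: "z ^ (k mod N) = z ^ k" for k
  proof -
    have "z ^ k = z ^ (N * (k div N)) * z ^ (k mod N)"
      by (metis mult_div_mod_eq power_add)
    also have "z ^ (N * (k div N)) = 1" by (simp add: power_mult zN)
    finally show ?thesis by simp
  qed
  have rq: "r = (\<Sum>l\<le>degree q. of_int (coeff q l) * z ^ l)"
    unfolding r_def by (simp add: poly_altdef coeff_map_poly degree_map_poly)
  have "map_mat of_int C *\<^sub>v v = r \<cdot>\<^sub>v v"
  proof (rule eq_vecI)
    fix i assume i: "i < dim_vec (r \<cdot>\<^sub>v v)"
    hence iN: "i < N" by (simp add: v_def)
    have "(map_mat of_int C *\<^sub>v v) $ i = (\<Sum>j<N. of_int (C $$ (i,j)) * z ^ j)"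
      using iN Cc by (simp add: mult_mat_vec_def scalar_prod_def v_def sum.atLeast0_lessThan_Suc lessThan_atLeast0)
    also have "\<dots> = (\<Sum>j<N. \<Sum>l\<le>degree q. if (i+l) mod N = j then of_int (coeff q l) * z ^ j else 0)"
      unfolding C_def using iN by (auto simp: sum_distrib_right of_int_sum intro!: sum.cong)
    also have "\<dots> = (\<Sum>l\<le>degree q. \<Sum>j<N. if (i+l) mod N = j then of_int (coeff q l) * z ^ j else 0)"
      by (rule sum.swap)
    also have "\<dots> = (\<Sum>l\<le>degree q. of_int (coeff q l) * z ^ ((i+l) mod N))"
      using N by (intro sum.cong) (auto simp: sum.delta')
    also have "\<dots> = (\<Sum>l\<le>degree q. z ^ i * (of_int (coeff q l) * z ^ l))"
      by (intro sum.cong) (auto simp: zmod power_add)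
    also have "\<dots> = z ^ i * r" by (simp add: rq sum_distrib_left)
    also have "\<dots> = (r \<cdot>\<^sub>v v) $ i" using iN by (simp add: v_def)
    finally show "(map_mat of_int C *\<^sub>v v) $ i = (r \<cdot>\<^sub>v v) $ i" .
  qed (simp add: v_def C_def)
  moreover have "v \<noteq> 0\<^sub>v N"
  proof
    assume "v = 0\<^sub>v N"
    hence "v $ 0 = 0\<^sub>v N $ 0" by simp
    thus False using N by (simp add: v_def)
  qed
  ultimately have "eigenvalue (map_mat of_int C) r"
    unfolding eigenvalue_def eigenvector_def using Cc by (intro exI[of _ v]) (auto simp: v_def)
  hence "poly (char_poly (map_mat of_int C)) r = 0"
    using eigenvalue_root_char_poly[OF Cc'] by simp
  moreover have "char_poly (map_mat (of_int::int\<Rightarrow>complex) C) = map_poly of_int (char_poly C)"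
    by (rule of_int_hom.char_poly_hom[OF Cc])
  ultimately have "poly (map_poly of_int (char_poly C)) r = 0" by simp
  moreover have "lead_coeff (char_poly C) = 1" using degree_monic_char_poly[OF Cc] by simp
  ultimately show ?thesis unfolding r_def[symmetric] algebraic_int_altdef_ipoly by blast
qed

lemma prime_power_dvd_choose:
  fixes p :: nat
  assumes p: "prime p" and k: "0 < k" "k < p ^ E"
  shows "p dvd (p ^ E choose k)"
proof (rule ccontr)
  assume np: "\<not> p dvd (p ^ E choose k)"
  have "k * (p ^ E choose k) = p ^ E * ((p ^ E - 1) choose (k - 1))"
    using times_binomial_minus1_eq[OF k(1)] by simp
  hence "p ^ E dvd k * (p ^ E choose k)" by simp
  moreover have "coprime (p ^ E) (p ^ E choose k)"
    using np p by (simp add: prime_imp_coprime coprime_power_left_iff)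
  ultimately have "p ^ E dvd k" using coprime_dvd_mult_left_iff by blast
  thus False using k by (simp add: nat_dvd_not_less)
qed

lemma neg1_pow_dvd:
  fixes p :: nat
  assumes p: "prime p" and E: "E \<ge> 1"
  shows "int p dvd ((-1) ^ (p ^ E) + 1)"
proof (cases "p = 2")
  case True
  have "even ((2::nat) ^ E)" using E by simp
  hence "(-1::int) ^ (2 ^ E) = 1" by (simp add: neg_one_even_power)
  thus ?thesis using True by simp
next
  case False
  hence "p > 2" using prime_ge_2_nat[OF p] by linarith
  hence "odd p" using p prime_odd_nat by blast
  hence "odd (p ^ E)" by simp
  hence "(-1::int) ^ (p ^ E) = -1" by (simp add: neg_one_odd_power)
  thus ?thesis by simp
qed

lemma frob_poly:
  fixes p :: nat
  assumes p: "prime p" and E: "E \<ge> 1"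
  shows "\<exists>D::int poly. \<forall>x::complex. (1 - x) ^ (p ^ E) = 1 - x ^ (p ^ E) + of_nat p * poly (map_poly of_int D) x"
proof -
  define N where "N = p ^ E"
  have pge: "p \<ge> 2" using p prime_ge_2_nat by blast
  have Npos: "N \<ge> p" unfolding N_def using power_increasing[OF E, of p] pge by simp
  define d where "d k = (if k = 0 then 0 else if k = N then ((-1) ^ N + 1) div int p
                     else (-1) ^ k * int (N choose k) div int p)" for k
  define D :: "int poly" where "D = (\<Sum>k\<le>N. monom (d k) k)"
  have termeq: "of_nat (N choose k) * (- x) ^ k * 1 ^ (N - k) =
     (if k = 0 then 1 else 0) - (if k = N then x ^ N else 0) + of_nat p * (of_int (d k) * x ^ k)"
    if kN: "k \<le> N" for k and x :: complex
  proof -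
    consider "k = 0" | "k = N" | "0 < k" "k < N" using kN by linarith
    thus ?thesis
    proof cases
      case 1 thus ?thesis using Npos pge by (simp add: d_def)
    next
      case 2
      have dv: "int p dvd ((-1) ^ N + 1)" unfolding N_def using neg1_pow_dvd[OF p E] .
      define c where "c = ((-1::int) ^ N + 1) div int p"
      have dN: "d N = c" using Npos pge by (simp add: d_def c_def)
      have "(-1::int) ^ N = -1 + int p * c"
        using dvd_mult_div_cancel[OF dv] unfolding c_def by simp
      hence "(of_int ((-1::int) ^ N) :: complex) = of_int (-1 + int p * c)"
        by (simp only:)
      hence m1: "(-1::complex) ^ N = -1 + of_nat p * of_int c"
        by simp
      have pm: "(- x) ^ N = (-1) ^ N * x ^ N" by (rule power_minus)
      have "of_nat (N choose N) * (- x) ^ N * 1 ^ (N - N) = (-1) ^ N * x ^ N"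
        by (simp only: pm binomial_n_n of_nat_1 mult_1_left power_one mult_1_right)
      also have "\<dots> = (-1 + of_nat p * of_int c) * x ^ N" by (simp only: m1)
      also have "\<dots> = 0 - x ^ N + of_nat p * (of_int (d N) * x ^ N)"
        by (simp add: dN algebra_simps)
      finally show ?thesis using 2 Npos pge by simp
    next
      case 3
      have dv: "int p dvd int (N choose k)" using prime_power_dvd_choose[OF p 3(1)] 3(2)
        unfolding N_def by simp
      then obtain c where c: "int (N choose k) = int p * c" by blast
      have dk: "d k = (-1) ^ k * c" using 3 pge c by (simp add: d_def)
      have "(of_int (int (N choose k)) :: complex) = of_int (int p * c)"
        by (simp only: c)
      hence "(of_nat (N choose k) :: complex) = of_nat p * of_int c"
        by simp
      have pm: "(- x) ^ k = (-1) ^ k * x ^ k" by (rule power_minus)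
      have "of_nat (N choose k) * (- x) ^ k * 1 ^ (N - k) = of_nat p * of_int c * ((-1) ^ k * x ^ k)"
        by (simp only: pm \<open>(of_nat (N choose k) :: complex) = of_nat p * of_int c\<close> power_one mult_1_right)
      also have "\<dots> = of_nat p * (of_int (d k) * x ^ k)" by (simp add: dk)
      finally show ?thesis using 3 by simp
    qed
  qed
  have "(1 - x) ^ N = 1 - x ^ N + of_nat p * poly (map_poly of_int D) x" for x :: complex
  proof -
    have "(1 - x) ^ N = (-x + 1) ^ N" by simp
    also have "\<dots> = (\<Sum>k\<le>N. of_nat (N choose k) * (- x) ^ k * 1 ^ (N - k))"
      by (rule binomial_ring)
    also have "\<dots> = (\<Sum>k\<le>N. (if k = 0 then 1 else 0) - (if k = N then x ^ N else 0) + of_nat p * (of_int (d k) * x ^ k))"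
      by (intro sum.cong refl termeq) simp
    also have "\<dots> = 1 - x ^ N + of_nat p * (\<Sum>k\<le>N. of_int (d k) * x ^ k)"
      by (simp add: sum.distrib sum_subtractf sum_distrib_left)
    also have "(\<Sum>k\<le>N. of_int (d k) * x ^ k) = poly (map_poly of_int D) x"
      unfolding D_def by (simp add: hom_distribs poly_sum poly_monom)
    finally show ?thesis .
  qed
  thus ?thesis unfolding N_def by blast
qed

lemma one_minus_root_not_unit:
  fixes p :: nat and z :: complex and Q :: "int poly"
  assumes p: "prime p" and E: "E \<ge> 1" and zN: "z ^ (p ^ E) = 1"
    and inv: "(1 - z) * poly (map_poly of_int Q) z = 1"
  shows False
proof -
  define N where "N = p ^ E"
  have Npos: "N > 0" unfolding N_def using p by (simp add: prime_gt_0_nat)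
  obtain D :: "int poly" where D: "\<And>x::complex. (1 - x) ^ N = 1 - x ^ N + of_nat p * poly (map_poly of_int D) x"
    using frob_poly[OF p E] unfolding N_def by blast
  define qz where "qz = poly (map_poly (of_int :: int \<Rightarrow> complex) Q) z"
  have "1 = ((1 - z) * qz) ^ N" using inv by (simp add: qz_def)
  also have "\<dots> = (1 - z) ^ N * qz ^ N" by (simp add: power_mult_distrib)
  also have "\<dots> = of_nat p * (poly (map_poly of_int D) z * qz ^ N)"
    using D[of z] zN by (simp add: N_def)
  also have "poly (map_poly of_int D) z * qz ^ N = poly (map_poly of_int (D * Q ^ N)) z"
    by (simp add: qz_def hom_distribs)
  finally have eq: "1 / of_nat p = poly (map_poly of_int (D * Q ^ N)) z"
    using p by (simp add: field_simps prime_gt_0_nat)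
  have "algebraic_int (1 / (of_nat p :: complex))"
    unfolding eq using algint_poly_root_unity[of z N] zN Npos by (simp add: N_def)
  moreover have "1 / (of_nat p :: complex) \<in> \<rat>" by simp
  ultimately have "1 / (of_nat p :: complex) \<in> \<int>" by (rule rational_algebraic_int_is_int)
  then obtain m where m: "1 / (of_nat p :: complex) = of_int m" by (auto elim: Ints_cases)
  hence "(of_int (m * int p) :: complex) = 1" using p by (simp add: field_simps prime_gt_0_nat)
  hence "m * int p = 1" by (metis of_int_eq_1_iff)
  hence "int p dvd 1" by (metis dvd_triv_right)
  thus False using p by simp
qed

definition ew :: "nat \<Rightarrow> int \<Rightarrow> complex" where
  "ew n x = cis (2 * pi * of_int x / of_nat n)"

lemma ew_add: "ew n (x + y) = ew n x * ew n y"
  unfolding ew_def by (simp add: cis_mult add_divide_distrib algebra_simps)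

lemma ew_0 [simp]: "ew n 0 = 1"
  unfolding ew_def by simp

lemma norm_ew [simp]: "norm (ew n x) = 1"
  unfolding ew_def by simp

lemma ew_cnj: "cnj (ew n x) = ew n (- x)"
  unfolding ew_def by (simp add: cis_cnj)

lemma ew_pow: "ew n d ^ k = ew n (d * int k)"
  unfolding ew_def by (simp add: DeMoivre algebra_simps)

lemma ew_mult_n:
  assumes "n > 0" shows "ew n (int n * q) = 1"
proof -
  have "2 * pi * of_int (int n * q) / of_nat n = 2 * pi * of_int q" using assms by simp
  thus ?thesis unfolding ew_def by simp
qed

lemma ew_cong:
  assumes n: "n > 0" and xy: "x mod int n = y mod int n"
  shows "ew n x = ew n y"
proof -
  have md: "ew n z = ew n (z mod int n)" for z
  proof -
    have "ew n z = ew n (z mod int n + int n * (z div int n))" by (simp only: mod_mult_div_eq)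
    also have "\<dots> = ew n (z mod int n)" by (simp only: ew_add ew_mult_n[OF n] mult_1_right)
    finally show ?thesis .
  qed
  have "ew n x = ew n (x mod int n)" by (rule md)
  also have "\<dots> = ew n y" by (simp add: xy md[of y])
  finally show ?thesis .
qed

lemma ew_eq_1_iff:
  assumes n: "n > 0" shows "ew n d = 1 \<longleftrightarrow> int n dvd d"
proof
  assume "int n dvd d"
  then obtain q where "d = int n * q" by blast
  thus "ew n d = 1" using ew_mult_n[OF n] by simp
next
  assume h: "ew n d = 1"
  hence "cos (2 * pi * of_int d / of_nat n) = 1"
    unfolding ew_def by (metis complex.sel(1) cis.sel(1) one_complex.sel(1))
  then obtain m :: int where m: "2 * pi * of_int d / of_nat n = of_int m * 2 * pi"
    using cos_one_2pi_int by blast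
  hence "of_int d = of_int m * (of_nat n :: real)" using n by (simp add: field_simps)
  hence "d = m * int n" by (metis of_int_eq_iff of_int_mult of_int_of_nat_eq)
  thus "int n dvd d" by simp
qed

lemma ew_orth:
  assumes n: "n > 0"
  shows "(\<Sum>k<n. ew n (d * int k)) = (if int n dvd d then of_nat n else 0)"
proof (cases "int n dvd d")
  case True
  hence "ew n d = 1" using ew_eq_1_iff[OF n] by simp
  hence "ew n (d * int k) = 1" for k using ew_pow[of n d k] by simp
  thus ?thesis using True by simp
next
  case False
  hence ne: "ew n d \<noteq> 1" using ew_eq_1_iff[OF n] by simp
  have "ew n d ^ n = 1" using ew_pow[of n d n] ew_eq_1_iff[OF n] by simp
  hence "(\<Sum>k<n. ew n d ^ k) = 0" using ne by (simp add: sum_gp_strict)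
  thus ?thesis using False by (simp add: ew_pow)
qed

lemma dvd_small_iff:
  fixes x :: int
  assumes "- int n < x" "x < int n"
  shows "int n dvd x \<longleftrightarrow> x = 0"
proof
  assume "int n dvd x"
  then obtain q where q: "x = int n * q" by blast
  have "q = 0"
  proof (rule ccontr)
    assume "q \<noteq> 0"
    hence "\<bar>q\<bar> \<ge> 1" by simp
    hence "\<bar>x\<bar> \<ge> int n" unfolding q by (simp add: abs_mult mult_le_cancel_left1)
    thus False using assms by linarith
  qed
  thus "x = 0" using q by simp
qed simp

lemma ew_orth2:
  assumes n: "n > 0" and k: "k < n" and l: "l < n"
  shows "(\<Sum>s<n. ew n ((int l - int k) * int s)) = (if l = k then of_nat n else 0)"
proof -
  have "int n dvd (int l - int k) \<longleftrightarrow> int l - int k = 0"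
    using k l by (intro dvd_small_iff) auto
  thus ?thesis using ew_orth[OF n, of "int l - int k"] by auto
qed

definition lam :: "nat \<Rightarrow> (nat \<Rightarrow> complex) \<Rightarrow> nat \<Rightarrow> complex" where
  "lam n a k = (\<Sum>j<n. a j * ew n (int j * int k))"

lemma dft_inj:
  assumes n: "n > 0" and h: "\<And>s. s < n \<Longrightarrow> (\<Sum>l<n. x l * ew n (int s * int l)) = 0"
    and k: "k < n"
  shows "x k = 0"
proof -
  have "0 = (\<Sum>s<n. ew n (- (int s * int k)) * (\<Sum>l<n. x l * ew n (int s * int l)))"
    using h by simp
  also have "\<dots> = (\<Sum>s<n. \<Sum>l<n. x l * ew n ((int l - int k) * int s))"
  proof (intro sum.cong refl)
    fix s l
    have "ew n (- (int s * int k)) * ew n (int s * int l) = ew n ((int l - int k) * int s)"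
      by (simp add: ew_add[symmetric] algebra_simps)
    thus "ew n (- (int s * int k)) * (\<Sum>l<n. x l * ew n (int s * int l)) =
          (\<Sum>l<n. x l * ew n ((int l - int k) * int s))"
      by (simp add: sum_distrib_left ew_add[symmetric] algebra_simps)
  qed
  also have "\<dots> = (\<Sum>l<n. x l * (\<Sum>s<n. ew n ((int l - int k) * int s)))"
    by (subst sum.swap) (simp add: sum_distrib_left)
  also have "\<dots> = (\<Sum>l<n. x l * (if l = k then of_nat n else 0))"
    by (intro sum.cong refl) (simp add: ew_orth2[OF n k])
  also have "\<dots> = x k * of_nat n" using k by (simp add: if_distrib sum.delta' cong: if_cong)
  finally show ?thesis using n by simp
qed

lemma circ_entry:
  assumes n: "n > 0" and s: "s < n" and c: "c < n"
  shows "a ((c + n - s) mod n) = (\<Sum>l<n. lam n a l * ew n ((int s - int c) * int l)) / of_nat n"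
proof -
  define i0 where "i0 = (c + n - s) mod n"
  have i0n: "i0 < n" unfolding i0_def using n by simp
  define X where "X = int c + int n - int s"
  have i0X: "int i0 = X - int n * (X div int n)"
  proof -
    have "int i0 = int (c + n - s) mod int n" unfolding i0_def by (simp only: of_nat_mod)
    also have "int (c + n - s) = X" unfolding X_def using s by (simp add: of_nat_diff)
    finally show ?thesis by (simp add: minus_div_mult_eq_mod[symmetric] mult.commute)
  qed
  have cond: "int n dvd (int i + int s - int c) \<longleftrightarrow> i = i0" if i: "i < n" for i
  proof -
    have e: "int i + int s - int c = (int i - int i0) + int n * (1 - X div int n)"
      using i0X unfolding X_def by (simp add: algebra_simps)
    have "int n dvd (int i + int s - int c) \<longleftrightarrow> int n dvd (int i - int i0)"
      by (subst e) (rule dvd_add_left_iff, simp)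
    also have "\<dots> \<longleftrightarrow> int i - int i0 = 0" using i i0n by (intro dvd_small_iff) auto
    finally show ?thesis by simp
  qed
  have "(\<Sum>l<n. lam n a l * ew n ((int s - int c) * int l)) =
        (\<Sum>l<n. \<Sum>i<n. a i * ew n ((int i + int s - int c) * int l))"
    unfolding lam_def sum_distrib_right
    by (intro sum.cong refl) (simp add: mult.assoc ew_add[symmetric] algebra_simps)
  also have "\<dots> = (\<Sum>i<n. a i * (\<Sum>l<n. ew n ((int i + int s - int c) * int l)))"
    by (subst sum.swap) (simp add: sum_distrib_left)
  also have "\<dots> = (\<Sum>i<n. a i * (if i = i0 then of_nat n else 0))"
    by (intro sum.cong refl) (simp add: ew_orth[OF n] cond)
  also have "\<dots> = a i0 * of_nat n" using i0n by (simp add: if_distrib sum.delta' cong: if_cong)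
  finally show ?thesis using n unfolding i0_def by simp
qed

lemma sum_swap3: "(\<Sum>s\<in>A. \<Sum>k\<in>B. \<Sum>l\<in>C. f s k l) = (\<Sum>k\<in>B. \<Sum>l\<in>C. \<Sum>s\<in>A. f s k l)"
proof -
  have "(\<Sum>s\<in>A. \<Sum>k\<in>B. \<Sum>l\<in>C. f s k l) = (\<Sum>k\<in>B. \<Sum>s\<in>A. \<Sum>l\<in>C. f s k l)"
    by (rule sum.swap)
  also have "\<dots> = (\<Sum>k\<in>B. \<Sum>l\<in>C. \<Sum>s\<in>A. f s k l)"
    by (intro sum.cong refl) (rule sum.swap)
  finally show ?thesis .
qed

lemma circ_carrier: "circ n a \<in> carrier_mat n n"
  unfolding circ_def by simp

lemma circ_index: "r < n \<Longrightarrow> c < n \<Longrightarrow> circ n a $$ (r, c) = a ((c + n - r) mod n)"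
  unfolding circ_def by simp

lemma circ_pow:
  assumes n: "n > 0" and r: "r < n" and c: "c < n"
  shows "(circ n a ^\<^sub>m m) $$ (r, c) = (\<Sum>k<n. lam n a k ^ m * ew n ((int r - int c) * int k)) / of_nat n"
  using r c
proof (induction m arbitrary: r c)
  case 0
  have "(circ n a ^\<^sub>m 0) $$ (r, c) = (if r = c then 1 else 0)"
    using 0 circ_carrier[of n a] by simp
  also have "\<dots> = (\<Sum>k<n. ew n ((int r - int c) * int k)) / of_nat n"
    using ew_orth2[OF n 0(2) 0(1)] n by simp
  finally show ?case by simp
next
  case (Suc m)
  let ?L = "lam n a"
  have "(circ n a ^\<^sub>m Suc m) $$ (r, c) = (\<Sum>s<n. (circ n a ^\<^sub>m m) $$ (r, s) * circ n a $$ (s, c))"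
    using Suc.prems circ_carrier[of n a]
    by (simp add: scalar_prod_def lessThan_atLeast0)
  also have "\<dots> = (\<Sum>s<n. ((\<Sum>k<n. ?L k ^ m * ew n ((int r - int s) * int k)) / of_nat n) *
                          ((\<Sum>l<n. ?L l * ew n ((int s - int c) * int l)) / of_nat n))"
    using Suc by (intro sum.cong refl) (simp add: circ_index circ_entry[OF n])
  also have "\<dots> = (\<Sum>s<n. \<Sum>k<n. \<Sum>l<n. (?L k ^ m * ?L l * ew n (int r * int k - int c * int l) / (of_nat n * of_nat n))
                        * ew n ((int l - int k) * int s))"
    apply (intro sum.cong refl)
    apply (simp add: sum_product sum_divide_distrib ew_add[symmetric] algebra_simps)
    apply (subst sum.swap)
    apply (simp add: algebra_simps)
    done
  also have "\<dots> = (\<Sum>k<n. \<Sum>l<n. (?L k ^ m * ?L l * ew n (int r * int k - int c * int l) / (of_nat n * of_nat n))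
                        * (\<Sum>s<n. ew n ((int l - int k) * int s)))"
    by (subst sum_swap3) (simp add: sum_distrib_left)
  also have "\<dots> = (\<Sum>k<n. \<Sum>l<n. (?L k ^ m * ?L l * ew n (int r * int k - int c * int l) / (of_nat n * of_nat n))
                        * (if l = k then of_nat n else 0))"
    by (intro sum.cong refl) (simp add: ew_orth2[OF n])
  also have "\<dots> = (\<Sum>k<n. (?L k ^ m * ?L k * ew n (int r * int k - int c * int k) / (of_nat n * of_nat n)) * of_nat n)"
    by (intro sum.cong refl) (simp add: if_distrib sum.delta cong: if_cong)
  also have "\<dots> = (\<Sum>k<n. ?L k ^ Suc m * ew n ((int r - int c) * int k)) / of_nat n"
    using n by (simp add: sum_divide_distrib algebra_simps)
  finally show ?case .
qed

lemma circ_index_dft: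
  assumes n: "n > 0" and r: "r < n" and c: "c < n"
  shows "circ n a $$ (r, c) = (\<Sum>l<n. lam n a l * ew n ((int r - int c) * int l)) / of_nat n"
  using circ_index[OF r c] circ_entry[OF n r c] by simp

lemma herm_real:
  assumes n: "n > 0" and herm: "hermitian_mat (circ n a)" and k: "k < n"
  shows "cnj (lam n a k) = lam n a k"
proof -
  have "lam n a k - cnj (lam n a k) = 0"
  proof (rule dft_inj[OF n _ k])
    fix s assume s: "s < n"
    have dim: "dim_row (circ n a) = n" by (simp add: circ_def)
    have "circ n a $$ (s, 0) = cnj (circ n a $$ (0, s))"
      using herm s n unfolding hermitian_mat_def dim by blast
    hence "(\<Sum>l<n. lam n a l * ew n ((int s - int 0) * int l)) / of_nat n =
           cnj ((\<Sum>l<n. lam n a l * ew n ((int 0 - int s) * int l)) / of_nat n)"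
      using s n by (simp only: circ_index_dft[OF n])
    also have "cnj ((\<Sum>l<n. lam n a l * ew n ((int 0 - int s) * int l)) / of_nat n) =
       (\<Sum>l<n. cnj (lam n a l) * ew n (int s * int l)) / of_nat n"
      by (simp add: ew_cnj)
    finally have "(\<Sum>l<n. lam n a l * ew n (int s * int l)) = (\<Sum>l<n. cnj (lam n a l) * ew n (int s * int l))"
      using n by simp
    thus "(\<Sum>l<n. (lam n a l - cnj (lam n a l)) * ew n (int s * int l)) = 0"
      by (simp add: algebra_simps sum_subtractf)
  qed
  thus ?thesis by simp
qed

lemma exp_series_div:
  fixes x :: complex
  shows "(\<lambda>m. x ^ m / of_nat (fact m)) sums exp x"
proof -
  have "(\<lambda>m. x ^ m /\<^sub>R fact m) = (\<lambda>m. x ^ m / of_nat (fact m))"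
    by (rule ext) (simp add: scaleR_conv_of_real divide_inverse mult.commute)
  thus ?thesis using exp_converges[of x] by simp
qed

lemma exp_series_div2:
  fixes x y :: complex
  shows "(\<lambda>m. x ^ m * y ^ m / of_nat (fact m)) sums exp (x * y)"
  using exp_series_div[of "x * y"] by (simp add: power_mult_distrib)

lemma transfer_amp_circ:
  assumes n: "n > 0" and w: "w < n" and v: "v < n"
  shows "transfer_amp (circ n a) t w v =
    (\<Sum>k<n. exp (- \<i> * complex_of_real t * lam n a k) * ew n ((int w - int v) * int k)) / of_nat n"
proof -
  let ?z = "- \<i> * complex_of_real t"
  have eq: "(\<lambda>m. (?z ^ m / of_nat (fact m)) * (circ n a ^\<^sub>m m) $$ (w, v)) =
        (\<lambda>m. \<Sum>k<n. (ew n ((int w - int v) * int k) / of_nat n) * (?z ^ m * lam n a k ^ m / of_nat (fact m)))"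
    by (rule ext) (simp add: circ_pow[OF n w v] sum_distrib_left sum_divide_distrib algebra_simps)
  have "(\<lambda>m. \<Sum>k<n. (ew n ((int w - int v) * int k) / of_nat n) * (?z ^ m * lam n a k ^ m / of_nat (fact m)))
     sums (\<Sum>k<n. (ew n ((int w - int v) * int k) / of_nat n) * exp (?z * lam n a k))"
    by (intro sums_sum sums_mult exp_series_div2)
  hence "(\<lambda>m. (?z ^ m / of_nat (fact m)) * (circ n a ^\<^sub>m m) $$ (w, v))
     sums ((\<Sum>k<n. exp (?z * lam n a k) * ew n ((int w - int v) * int k)) / of_nat n)"
    unfolding eq by (simp add: sum_divide_distrib algebra_simps)
  thus ?thesis unfolding transfer_amp_def by (simp add: sums_iff)
qed

lemma norm_sum_eq_card:
  fixes z :: "nat \<Rightarrow> complex"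
  assumes n: "n > 0" and nz: "\<And>k. k < n \<Longrightarrow> norm (z k) = 1"
    and S: "norm (\<Sum>k<n. z k) = of_nat n"
  shows "\<And>k. k < n \<Longrightarrow> z k = (\<Sum>k<n. z k) / of_nat n"
proof -
  define S where "S = (\<Sum>k<n. z k)"
  define g where "g = S / of_nat n"
  have ng: "norm g = 1" unfolding g_def S_def using S n by (simp add: norm_divide)
  have zz: "z k * cnj (z k) = 1" if "k < n" for k
    using complex_norm_square[of "z k"] nz[OF that] by simp
  have gg: "g * cnj g = 1" using complex_norm_square[of g] ng by simp
  have Sg: "S * cnj g = of_nat n"
  proof -
    have "S = of_nat n * g" unfolding g_def using n by simp
    thus ?thesis using gg by simp
  qed
  have "(\<Sum>k<n. (z k - g) * cnj (z k - g)) =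
        (\<Sum>k<n. z k * cnj (z k)) - S * cnj g - g * cnj S + of_nat n * (g * cnj g)"
    unfolding S_def by (simp add: algebra_simps sum_subtractf sum.distrib sum_distrib_left sum_distrib_right)
  also have "\<dots> = 0"
  proof -
    have "(\<Sum>k<n. z k * cnj (z k)) = of_nat n" using zz by simp
    moreover have "g * cnj S = of_nat n" using Sg by (metis complex_cnj_cnj complex_cnj_mult complex_cnj_of_nat mult.commute)
    ultimately show ?thesis using Sg gg by simp
  qed
  moreover have "(\<Sum>k<n. (z k - g) * cnj (z k - g)) = (\<Sum>k<n. complex_of_real ((norm (z k - g))\<^sup>2))"
    by (intro sum.cong refl) (rule complex_norm_square[symmetric])
  ultimately have "(\<Sum>k<n. complex_of_real ((norm (z k - g))\<^sup>2)) = 0"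
    by simp
  hence "complex_of_real (\<Sum>k<n. (norm (z k - g))\<^sup>2) = 0" by simp
  hence "(\<Sum>k<n. (norm (z k - g))\<^sup>2) = 0" by (simp only: of_real_eq_0_iff)
  hence "\<forall>k\<in>{..<n}. (norm (z k - g))\<^sup>2 = 0" by (subst (asm) sum_nonneg_eq_0_iff) auto
  thus "\<And>k. k < n \<Longrightarrow> z k = S / of_nat n" unfolding g_def by auto
qed

lemma sum_k_geom:
  fixes z :: complex
  shows "(z - 1) * (\<Sum>k<N. of_nat k * z ^ k) = of_nat N * z ^ N - (\<Sum>k<N. z ^ Suc k)"
  by (induction N) (simp_all add: algebra_simps)

theorem theorem8:
  fixes n :: nat and a :: "nat \<Rightarrow> complex"
  assumes herm: "hermitian_mat (circ n a)"
    and upst: "universal_pst (circ n a)"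
    and n_form: "prime n \<or> (\<exists>p::nat. prime p \<and> n = p ^ 2) \<or> (\<exists>k::nat. n = 2 ^ k)"
  shows "dense_circ n a"
proof (cases "n \<le> 1")
  case True
  thus ?thesis unfolding dense_circ_def by auto
next
  case False
  hence n2: "n \<ge> 2" by simp
  hence n: "n > 0" by simp
  obtain p E where p: "prime p" and E: "E \<ge> 1" and nE: "n = p ^ E"
  proof -
    consider "prime n" | "\<exists>p::nat. prime p \<and> n = p ^ 2" | "\<exists>k::nat. n = 2 ^ k" using n_form by blast
    thus ?thesis
    proof cases
      case 1 thus ?thesis using that[of n 1] by simp
    next
      case 2
      then obtain q :: nat where "prime q" "n = q ^ 2" by blast
      thus ?thesis using that[of q 2] by simp
    next
      case 3
      then obtain k where k: "n = 2 ^ k" by blast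
      have "k \<noteq> 0" using k n2 by (cases k) auto
      thus ?thesis using that[of 2 k] k by simp
    qed
  qed
  let ?L = "lam n a"
  have Lreal: "cnj (?L k) = ?L k" if "k < n" for k using herm_real[OF n herm that] .
  define l where "l k = Re (?L k)" for k
  have Lof: "?L k = complex_of_real (l k)" if "k < n" for k
    using Lreal[OF that] unfolding l_def by (metis Reals_cnj_iff complex_is_Real_iff of_real_Re)
  show ?thesis unfolding dense_circ_def
  proof
    fix j assume j: "j \<in> {1..n-1}"
    hence j0: "0 < j" and jn: "j < n" by auto
    show "a j \<noteq> 0"
    proof
      assume aj: "a j = 0"
      have dimA: "dim_row (circ n a) = n" by (simp add: circ_def)
      obtain t where t: "t > 0" and tr: "cmod (transfer_amp (circ n a) t 1 0) = 1"
      proof -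
        have u: "\<forall>v<n. \<forall>w<n. v \<noteq> w \<longrightarrow> (\<exists>t>0. cmod (transfer_amp (circ n a) t w v) = 1)"
          using upst unfolding universal_pst_def dimA .
        have "1 < n" using n2 by simp
        hence "\<exists>t>0. cmod (transfer_amp (circ n a) t 1 0) = 1" using u n by simp
        thus ?thesis using that by blast
      qed
      define z where "z k = exp (- \<i> * complex_of_real t * ?L k) * ew n (int k)" for k
      have "transfer_amp (circ n a) t 1 0 = (\<Sum>k<n. z k) / of_nat n"
        using transfer_amp_circ[OF n, of 1 0 a t] n2 unfolding z_def by simp
      hence Sn: "norm (\<Sum>k<n. z k) = of_nat n" using tr n by (simp add: norm_divide)
      have nz: "norm (z k) = 1" if "k < n" for k
        unfolding z_def using Lof[OF that] by (simp add: norm_exp_eq_Re norm_mult)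
      have zk: "z k = z 0" if "k < n" for k
        using norm_sum_eq_card[OF n nz Sn] that n by metis
      have "\<forall>k. \<exists>m::int. k < n \<longrightarrow> - t * l k + 2 * pi * of_nat k / of_nat n + t * l 0 = of_int m * 2 * pi"
      proof (intro allI)
        fix k
        show "\<exists>m::int. k < n \<longrightarrow> - t * l k + 2 * pi * of_nat k / of_nat n + t * l 0 = of_int m * 2 * pi"
        proof (cases "k < n")
          case True
          have "cis (- t * l k) * cis (2 * pi * of_nat k / of_nat n) = cis (- t * l 0)"
            using zk[OF True] Lof[OF True] Lof[OF n]
            unfolding z_def ew_def by (simp add: cis_conv_exp algebra_simps)
          hence "cis (- t * l k + 2 * pi * of_nat k / of_nat n) / cis (- t * l 0) = 1"
            by (simp add: cis_mult)
          hence "cis (- t * l k + 2 * pi * of_nat k / of_nat n + t * l 0) = 1"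
            by (simp add: cis_divide)
          hence "cos (- t * l k + 2 * pi * of_nat k / of_nat n + t * l 0) = 1"
            by (metis cis.sel(1) one_complex.sel(1))
          thus ?thesis using cos_one_2pi_int by blast
        qed simp
      qed
      then obtain m :: "nat \<Rightarrow> int" where
        m: "\<And>k. k < n \<Longrightarrow> - t * l k + 2 * pi * of_nat k / of_nat n + t * l 0 = of_int (m k) * 2 * pi"
        by metis
      define c where "c = 2 * pi / (t * of_nat n)"
      have c0: "c \<noteq> 0" unfolding c_def using t n by simp
      have lk: "l k = l 0 + c * (of_nat k - of_nat n * of_int (m k))" if "k < n" for k
        using m[OF that] t n unfolding c_def by (simp add: field_simps)
      define zeta where "zeta = ew n (- int j)"
      have ndvd: "\<not> int n dvd (- int j)" using j0 jn by (simp add: nat_dvd_not_less)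
      have zeta1: "zeta \<noteq> 1" unfolding zeta_def using ew_eq_1_iff[OF n] ndvd by simp
      have zetan: "zeta ^ n = 1" unfolding zeta_def using ew_pow ew_eq_1_iff[OF n] by simp
      have zsum: "(\<Sum>k<n. zeta ^ k) = 0" unfolding zeta_def using ew_orth[OF n, of "- int j"] ndvd
        by (simp add: ew_pow)
      have "a ((j + n - 0) mod n) = (\<Sum>k<n. ?L k * ew n ((int 0 - int j) * int k)) / of_nat n"
        by (rule circ_entry[OF n n jn])
      hence "(\<Sum>k<n. ?L k * zeta ^ k) = 0" using aj jn n by (simp add: zeta_def ew_pow)
      moreover have "(\<Sum>k<n. ?L k * zeta ^ k) = of_real (l 0) * (\<Sum>k<n. zeta ^ k) +
          of_real c * (\<Sum>k<n. (of_nat k - of_nat n * of_int (m k)) * zeta ^ k)"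
      proof -
        have "(\<Sum>k<n. ?L k * zeta ^ k) = (\<Sum>k<n. (of_real (l 0) + of_real c * (of_nat k - of_nat n * of_int (m k))) * zeta ^ k)"
        proof (intro sum.cong refl)
          fix k assume "k \<in> {..<n}"
          hence kn: "k < n" by simp
          show "?L k * zeta ^ k = (of_real (l 0) + of_real c * (of_nat k - of_nat n * of_int (m k))) * zeta ^ k"
            unfolding Lof[OF kn] lk[OF kn] by simp
        qed
        also have "\<dots> = of_real (l 0) * (\<Sum>k<n. zeta ^ k) +
          of_real c * (\<Sum>k<n. (of_nat k - of_nat n * of_int (m k)) * zeta ^ k)"
          by (simp add: sum_distrib_left sum.distrib ring_distribs mult.assoc)
        finally show ?thesis .
      qed
      ultimately have "(\<Sum>k<n. (of_nat k - of_nat n * of_int (m k)) * zeta ^ k) = 0"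
        using zsum c0 by simp
      hence eq1: "(\<Sum>k<n. of_nat k * zeta ^ k) = of_nat n * (\<Sum>k<n. of_int (m k) * zeta ^ k)"
        by (simp add: algebra_simps sum_subtractf sum_distrib_left)
      have "(zeta - 1) * (\<Sum>k<n. of_nat k * zeta ^ k) = of_nat n"
        using sum_k_geom[of zeta n] zetan zsum by (simp add: sum_distrib_left[symmetric])
      hence "of_nat n * ((1 - zeta) * (- (\<Sum>k<n. of_int (m k) * zeta ^ k))) = of_nat n * 1"
        unfolding eq1 by (simp add: algebra_simps)
      hence inv: "(1 - zeta) * (- (\<Sum>k<n. of_int (m k) * zeta ^ k)) = 1"
        using n by (subst (asm) mult_cancel_left) simp
      define Q :: "int poly" where "Q = (\<Sum>k<n. monom (- m k) k)"
      have "poly (map_poly of_int Q) zeta = - (\<Sum>k<n. of_int (m k) * zeta ^ k)"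
        unfolding Q_def by (simp add: hom_distribs poly_sum poly_monom sum_negf)
      with inv have "(1 - zeta) * poly (map_poly of_int Q) zeta = 1" by simp
      moreover have "zeta ^ (p ^ E) = 1" using zetan nE by simp
      ultimately show False using one_minus_root_not_unit[OF p E] by blast
    qed
  qed
qed

end
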